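(* Let $G$ be a group and $A$ a set with at least two elements. Let $n \geq 2$ be an integer such that there is $g \in G$ whose order is greater than $n$ (possibly infinite). Then there exists a lazy cellular automaton $\tau : A^G \to A^G$ with $\mathrm{ord}(\tau) = n$.
   Context: $A^G$ is the set of maps $G \to A$ with shift action $(g\cdot x)(h) := x(hg)$. A cellular automaton is a map $\tau : A^G \to A^G$ with a finite $S \subseteq G$ and $\mu : A^S \to A$ such that $\tau(x)(g) = \mu((g\cdot x)|_S)$. $\tau$ is lazy if there is such a local defining map $\mu : A^S \to A$ with $e \in S$ ($e$ the identity of $G$) and $p \in A^S$ such that for all $z \in A^S$: $\mu(z) = z(e)$ iff $z \neq p$. $\tau^k$ is the $k$-fold composition, $\tau^0$ the identity; $\mathrm{ord}(\tau) := |\{\tau^k : k \in \mathbb{N}\}|$, $\mathbb{N}=\{0,1,\dots\}$. The order of $g \in G$ is the least $m \ge 1$ with $g^m = e$, or $\infty$ if none exists. *)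

theory Defs
  imports Main "HOL-Library.Extended_Nat" "HOL-Library.FuncSet"
begin

text \<open>The group G is written additively (type class group_add, not necessarily
commutative): identity 0, product g h written g + h.\<close>

definition shift :: "'g::group_add \<Rightarrow> ('g \<Rightarrow> 'a) \<Rightarrow> ('g \<Rightarrow> 'a)" where
  "shift g x = (\<lambda>h. x (h + g))"

definition gpow :: "'g::group_add \<Rightarrow> nat \<Rightarrow> 'g" where
  "gpow g m = ((\<lambda>h. h + g) ^^ m) 0"

definition elem_order :: "'g::group_add \<Rightarrow> enat" where
  "elem_order g = (if \<exists>m. m \<ge> 1 \<and> gpow g m = 0
                   then enat (LEAST m. m \<ge> 1 \<and> gpow g m = 0) else \<infinity>)"

text \<open>Elements of A^S are represented as functions vanishing (= undefined) outside S.\<close>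
definition local_rule ::
  "(('g::group_add \<Rightarrow> 'a) \<Rightarrow> ('g \<Rightarrow> 'a)) \<Rightarrow> 'g set \<Rightarrow> (('g \<Rightarrow> 'a) \<Rightarrow> 'a) \<Rightarrow> bool" where
  "local_rule \<tau> S \<mu> \<longleftrightarrow> finite S \<and> (\<forall>x g. \<tau> x g = \<mu> (restrict (shift g x) S))"

definition cellular_automaton :: "(('g::group_add \<Rightarrow> 'a) \<Rightarrow> ('g \<Rightarrow> 'a)) \<Rightarrow> bool" where
  "cellular_automaton \<tau> \<longleftrightarrow> (\<exists>S \<mu>. local_rule \<tau> S \<mu>)"

definition lazy_ca :: "(('g::group_add \<Rightarrow> 'a) \<Rightarrow> ('g \<Rightarrow> 'a)) \<Rightarrow> bool" where
  "lazy_ca \<tau> \<longleftrightarrow> (\<exists>S \<mu> p. local_rule \<tau> S \<mu> \<and> 0 \<in> S \<and> p \<in> extensional S \<and>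
      (\<forall>z \<in> extensional S. \<mu> z = z 0 \<longleftrightarrow> z \<noteq> p))"

definition ca_ord :: "('c \<Rightarrow> 'c) \<Rightarrow> nat" where
  "ca_ord \<tau> = card {\<tau> ^^ k | k. True}"

end

theory Submission
  imports Defs
begin

definition lz :: "'g::group_add \<Rightarrow> 'g \<Rightarrow> 'a \<Rightarrow> 'a \<Rightarrow> ('g \<Rightarrow> 'a) \<Rightarrow> ('g \<Rightarrow> 'a)" where
  "lz g N a b y = (\<lambda>c. if y c = b \<and> y (g + c) = a \<and> y (N + c) = b then a else y c)"

definition mt :: "'g::group_add \<Rightarrow> 'g \<Rightarrow> 'a \<Rightarrow> 'a \<Rightarrow> ('g \<Rightarrow> 'a) \<Rightarrow> 'g \<Rightarrow> bool" where
  "mt g N a b y c \<longleftrightarrow> y c = b \<and> y (g + c) = a \<and> y (N + c) = b"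

lemma gpow_Suc: "gpow g (Suc m) = gpow g m + g"
  by (simp add: gpow_def)

lemma gpow_0: "gpow g 0 = 0"
  by (simp add: gpow_def)

lemma gpow_add: "gpow g (i + k) = gpow g i + gpow g k"
  by (induction k) (simp_all add: gpow_0 gpow_Suc add.assoc)

lemma gpow_comm: "g + gpow g m = gpow g m + g"
  by (induction m) (simp_all add: gpow_0 gpow_Suc add.assoc[symmetric])

lemma gpow_ne:
  assumes "\<And>m. 1 \<le> m \<Longrightarrow> m \<le> n \<Longrightarrow> gpow g m \<noteq> 0" "i < j" "j - i \<le> n"
  shows "gpow g i \<noteq> gpow g j"
proof
  assume e: "gpow g i = gpow g j"
  have "gpow g j = gpow g i + gpow g (j - i)" using gpow_add[of g i "j-i"] assms(2) by simp
  then have "gpow g i + gpow g (j - i) = gpow g i + 0" using e by simp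
  then have "gpow g (j - i) = 0" by (rule add_left_imp_eq)
  with assms show False by auto
qed

lemma order_gpow:
  assumes "enat n < elem_order g" "1 \<le> m" "m \<le> n"
  shows "gpow g m \<noteq> 0"
proof
  assume z: "gpow g m = 0"
  then have ex: "\<exists>m. m \<ge> 1 \<and> gpow g m = 0" using assms by blast
  have "(LEAST m. m \<ge> 1 \<and> gpow g m = 0) \<le> m" using z assms by (intro Least_le) simp
  then show False using assms(1,3) ex by (simp add: elem_order_def)
qed

lemma lz_a:
  assumes "a \<noteq> b" "y c = a" shows "lz g N a b y c = a"
  using assms by (simp add: lz_def)

lemma lz_mono:
  assumes "a \<noteq> b" "((lz g N a b) ^^ t) y c = a"
  shows "((lz g N a b) ^^ (t + s)) y c = a"
  using assms by (induction s) (simp_all add: lz_a)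

lemma lz_mono2:
  assumes "a \<noteq> b" "((lz g N a b) ^^ t) y c = a" "t \<le> u"
  shows "((lz g N a b) ^^ u) y c = a"
  using lz_mono[OF assms(1,2), of "u - t"] assms(3) by simp

lemma lz_back:
  assumes "a \<noteq> b" "mt g N a b (((lz g N a b) ^^ Suc t) y) c"
  shows "mt g N a b (((lz g N a b) ^^ t) y) (g + c)"
proof -
  define Y where "Y = ((lz g N a b) ^^ t) y"
  have Y': "((lz g N a b) ^^ Suc t) y = lz g N a b Y" by (simp add: Y_def)
  have m: "lz g N a b Y c = b" "lz g N a b Y (g + c) = a" "lz g N a b Y (N + c) = b"
    using assms(2) Y' by (simp_all add: mt_def)
  have nm: "\<not> mt g N a b Y c"
    using m(1) assms(1) by (auto simp: lz_def mt_def)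
  have c1: "Y c = b" using m(1) assms(1) by (auto simp: lz_def split: if_splits)
  have c2: "Y (N + c) = b" using m(3) assms(1) by (auto simp: lz_def split: if_splits)
  have "Y (g + c) \<noteq> a" using nm c1 c2 by (simp add: mt_def)
  then have "mt g N a b Y (g + c)" using m(2) by (simp add: lz_def mt_def split: if_splits)
  then show ?thesis by (simp add: Y_def)
qed

lemma lz_back_n:
  assumes "a \<noteq> b" "mt g N a b (((lz g N a b) ^^ (t + j)) y) c"
  shows "mt g N a b (((lz g N a b) ^^ t) y) (gpow g j + c)"
  using assms(2)
proof (induction j arbitrary: c)
  case 0
  then show ?case by (simp add: gpow_0)
next
  case (Suc j)
  have "mt g N a b (((lz g N a b) ^^ Suc (t + j)) y) c" using Suc.prems by simp
  then have "mt g N a b (((lz g N a b) ^^ (t + j)) y) (g + c)" using lz_back[OF assms(1)] by blast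
  then have "mt g N a b (((lz g N a b) ^^ t) y) (gpow g j + (g + c))" using Suc.IH by blast
  then show ?case by (simp add: gpow_Suc add.assoc)
qed

lemma no_late_match:
  assumes "a \<noteq> b" "N = gpow g n" "n \<ge> 2" "t \<ge> n - 1"
  shows "\<not> mt g N a b (((lz g N a b) ^^ t) y) c"
proof
  assume m: "mt g N a b (((lz g N a b) ^^ t) y) c"
  define s where "s = t - (n - 1)"
  have "t = s + (n - 1)" using assms(4) s_def by simp
  then have "mt g N a b (((lz g N a b) ^^ s) y) (gpow g (n - 1) + c)"
    using lz_back_n[OF assms(1)] m by metis
  then have "((lz g N a b) ^^ s) y (g + (gpow g (n - 1) + c)) = a" by (simp add: mt_def)
  moreover have "g + (gpow g (n - 1) + c) = N + c"
    using assms(2,3) gpow_comm[of g "n-1"] gpow_Suc[of g "n-1"]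
    by (simp add: add.assoc[symmetric])
  ultimately have "((lz g N a b) ^^ s) y (N + c) = a" by simp
  moreover have "s \<le> t" using s_def by simp
  ultimately have "((lz g N a b) ^^ t) y (N + c) = a" by (rule lz_mono2[OF assms(1)])
  with m assms(1) show False by (simp add: mt_def)
qed

lemma lz_fix:
  assumes "a \<noteq> b" "N = gpow g n" "n \<ge> 2"
  shows "(lz g N a b) ^^ n = (lz g N a b) ^^ (n - 1)"
proof
  fix y
  have n: "n = Suc (n - 1)" using assms(3) by simp
  have "((lz g N a b) ^^ n) y = lz g N a b (((lz g N a b) ^^ (n - 1)) y)"
    by (subst n) simp
  also have "\<dots> = ((lz g N a b) ^^ (n - 1)) y"
    using no_late_match[OF assms, of "n - 1" y]
    by (auto simp: lz_def mt_def fun_eq_iff)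
  finally show "((lz g N a b) ^^ n) y = ((lz g N a b) ^^ (n - 1)) y" .
qed

lemma lz_stable:
  assumes "a \<noteq> b" "N = gpow g n" "n \<ge> 2" "k \<ge> n - 1"
  shows "(lz g N a b) ^^ k = (lz g N a b) ^^ (n - 1)"
  using assms(4)
proof (induction k)
  case 0
  then show ?case by simp
next
  case (Suc k)
  show ?case
  proof (cases "Suc k = n - 1")
    case True then show ?thesis by simp
  next
    case False
    then have "k \<ge> n - 1" using Suc.prems by simp
    then have "(lz g N a b) ^^ Suc k = lz g N a b \<circ> (lz g N a b) ^^ (n - 1)"
      using Suc.IH by simp
    also have "\<dots> = (lz g N a b) ^^ Suc (n - 1)" by simp
    also have "\<dots> = (lz g N a b) ^^ (n - 1)" using lz_fix[OF assms(1-3)] assms(3)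
      by (simp add: Suc_diff_1)
    finally show ?thesis .
  qed
qed


lemma lz_inv:
  assumes "a \<noteq> b" "N = gpow g n" "n \<ge> 2" "t \<le> n - 1"
    and x0: "x0 = (\<lambda>c. if c = N then a else b)"
  shows "((lz g N a b) ^^ t) x0 c \<noteq> b \<Longrightarrow> (\<exists>j. n - t \<le> j \<and> j \<le> n \<and> c = gpow g j)"
  using assms(4)
proof (induction t arbitrary: c)
  case 0
  then show ?case using x0 assms(2) by (auto split: if_splits)
next
  case (Suc t)
  define Y where "Y = ((lz g N a b) ^^ t) x0"
  have IH: "\<And>c. Y c \<noteq> b \<Longrightarrow> \<exists>j. n - t \<le> j \<and> j \<le> n \<and> c = gpow g j"
    using Suc.IH Suc.prems(2) Y_def by simp
  have v: "lz g N a b Y c \<noteq> b" using Suc.prems(1) Y_def by simp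
  show ?case
  proof (cases "mt g N a b Y c")
    case True
    then have "Y (g + c) \<noteq> b" using assms(1) by (simp add: mt_def)
    then obtain j where j: "n - t \<le> j" "j \<le> n" "g + c = gpow g j" using IH by blast
    have "j \<ge> 1" using j(1) Suc.prems(2) by simp
    then have "gpow g j = g + gpow g (j - 1)"
      using gpow_Suc[of g "j - 1"] gpow_comm[of g "j - 1"] by simp
    then have "c = gpow g (j - 1)" using j(3) by simp
    then show ?thesis using j by (intro exI[of _ "j - 1"]) auto
  next
    case False
    then have "Y c \<noteq> b" using v by (auto simp: lz_def mt_def split: if_splits)
    then obtain j where "n - t \<le> j" "j \<le> n" "c = gpow g j" using IH by blast
    then show ?thesis by (intro exI[of _ j]) auto
  qed
qed

lemma lz_match:
  assumes "a \<noteq> b" "N = gpow g n" "n \<ge> 2" "t \<le> n - 2"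
    and x0: "x0 = (\<lambda>c. if c = N then a else b)"
    and ord: "\<And>m. 1 \<le> m \<Longrightarrow> m \<le> n \<Longrightarrow> gpow g m \<noteq> 0"
  shows "mt g N a b (((lz g N a b) ^^ t) x0) (gpow g (n - 1 - t))"
  using assms(4)
proof (induction t)
  case 0
  have "((lz g N a b) ^^ 0) x0 (gpow g (n - 1)) = b"
    using gpow_ne[OF ord, of n "n - 1" n] assms(2,3) x0 by auto
  moreover have "g + gpow g (n - 1) = N"
    using assms(2,3) gpow_comm[of g "n-1"] gpow_Suc[of g "n-1"] by simp
  moreover have "N + gpow g (n - 1) \<noteq> N"
  proof
    assume "N + gpow g (n - 1) = N"
    then have "N + gpow g (n - 1) = N + 0" by simp
    then have "gpow g (n - 1) = 0" by (rule add_left_imp_eq)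
    then show False using ord[of "n - 1"] assms(3) by fastforce
  qed
  ultimately show ?case using x0 by (simp add: mt_def)
next
  case (Suc t)
  define Y where "Y = ((lz g N a b) ^^ Suc t) x0"
  have inv: "\<And>c. Y c \<noteq> b \<Longrightarrow> \<exists>j. n - Suc t \<le> j \<and> j \<le> n \<and> c = gpow g j"
    using lz_inv[OF assms(1-3) _ x0] Suc.prems Y_def by simp
  have prev: "mt g N a b (((lz g N a b) ^^ t) x0) (gpow g (n - 1 - t))"
    using Suc by simp
  have e1: "n - 1 - t = Suc (n - 1 - Suc t)" using Suc.prems by simp
  have c1: "Y (gpow g (n - 1 - Suc t)) = b"
  proof (rule ccontr)
    assume "Y (gpow g (n - 1 - Suc t)) \<noteq> b"
    then obtain j where j: "n - Suc t \<le> j" "j \<le> n" "gpow g (n - 1 - Suc t) = gpow g j" using inv by blast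
    show False using gpow_ne[OF ord, of n "n - 1 - Suc t" j] j Suc.prems by simp
  qed
  have "g + gpow g (n - 1 - Suc t) = gpow g (n - 1 - t)"
    using e1 gpow_comm gpow_Suc by metis
  moreover have "Y (gpow g (n - 1 - t)) = a"
    using prev by (simp add: Y_def lz_def mt_def)
  ultimately have c2: "Y (g + gpow g (n - 1 - Suc t)) = a" by simp
  have c3: "Y (N + gpow g (n - 1 - Suc t)) = b"
  proof (rule ccontr)
    assume "Y (N + gpow g (n - 1 - Suc t)) \<noteq> b"
    then obtain j where j: "n - Suc t \<le> j" "j \<le> n" "N + gpow g (n - 1 - Suc t) = gpow g j" using inv by blast
    have "N + gpow g (n - 1 - Suc t) = gpow g (n + (n - 1 - Suc t))" using assms(2) gpow_add by metis
    moreover have "j < n + (n - 1 - Suc t)" "n + (n - 1 - Suc t) - j \<le> n" using j(1,2) Suc.prems by arith+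
    ultimately show False using gpow_ne[OF ord, of n j "n + (n - 1 - Suc t)"] j(3) by simp
  qed
  show ?case using c1 c2 c3 by (simp add: Y_def mt_def)
qed

lemma lz_distinct:
  assumes "a \<noteq> b" "N = gpow g n" "n \<ge> 2"
    and ord: "\<And>m. 1 \<le> m \<Longrightarrow> m \<le> n \<Longrightarrow> gpow g m \<noteq> 0"
    and ij: "i < j" "j \<le> n - 1"
  shows "(lz g N a b) ^^ i \<noteq> (lz g N a b) ^^ j"
proof
  define x0 where "x0 = (\<lambda>c. if c = N then (a::'a) else b)"
  assume e: "(lz g N a b) ^^ i = (lz g N a b) ^^ j"
  have m: "mt g N a b (((lz g N a b) ^^ i) x0) (gpow g (n - 1 - i))"
    using lz_match[OF assms(1-3) _ x0_def ord] ij by simp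
  then have "((lz g N a b) ^^ Suc i) x0 (gpow g (n - 1 - i)) = a" by (simp add: lz_def mt_def)
  moreover have "Suc i \<le> j" using ij by simp
  ultimately have "((lz g N a b) ^^ j) x0 (gpow g (n - 1 - i)) = a" by (rule lz_mono2[OF assms(1)])
  moreover have "((lz g N a b) ^^ i) x0 (gpow g (n - 1 - i)) = b" using m by (simp add: mt_def)
  ultimately show False using e assms(1) by simp
qed

theorem corollary4:
  fixes n :: nat
  assumes "\<exists>a b :: 'a. a \<noteq> b"
    and "n \<ge> 2"
    and "\<exists>g :: 'g::group_add. enat n < elem_order g"
  shows "\<exists>\<tau> :: ('g \<Rightarrow> 'a) \<Rightarrow> ('g \<Rightarrow> 'a). cellular_automaton \<tau> \<and> lazy_ca \<tau> \<and> ca_ord \<tau> = n"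
proof -
  obtain a b :: 'a where ab: "a \<noteq> b" using assms(1) by blast
  obtain g :: 'g where go: "enat n < elem_order g" using assms(3) by blast
  have ord: "\<And>m. 1 \<le> m \<Longrightarrow> m \<le> n \<Longrightarrow> gpow g m \<noteq> 0" using order_gpow[OF go] by blast
  define N where "N = gpow g n"
  define \<tau> where "\<tau> = lz g N a b"
  define S where "S = {0, g, N}"
  define p where "p = restrict (\<lambda>s. if s = g then a else b) S"
  define \<mu> where "\<mu> = (\<lambda>z::'g \<Rightarrow> 'a. if z = p then a else z 0)"
  have g1: "gpow g 1 = g" by (simp add: gpow_def)
  have g0: "g \<noteq> 0" using ord[of 1] assms(2) g1 by simp
  have N0: "N \<noteq> 0" using ord[of n] assms(2) N_def by simp
  have Ng: "N \<noteq> g" using gpow_ne[OF ord, of n 1 n] assms(2) N_def g1 by simp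
  have lr: "local_rule \<tau> S \<mu>"
    unfolding local_rule_def
  proof (intro conjI allI)
    show "finite S" by (simp add: S_def)
  next
    fix x :: "'g \<Rightarrow> 'a" and h :: 'g
    have "(restrict (shift h x) S = p) \<longleftrightarrow> (\<forall>s\<in>S. shift h x s = (if s = g then a else b))"
      unfolding p_def restrict_def by (auto simp: fun_eq_iff)
    also have "\<dots> \<longleftrightarrow> x h = b \<and> x (g + h) = a \<and> x (N + h) = b"
      using g0 N0 Ng by (auto simp: S_def shift_def)
    finally have eq: "(restrict (shift h x) S = p) \<longleftrightarrow> x h = b \<and> x (g + h) = a \<and> x (N + h) = b" .
    have "restrict (shift h x) S 0 = x h" by (simp add: S_def shift_def)
    then show "\<tau> x h = \<mu> (restrict (shift h x) S)"
      using eq by (simp add: \<tau>_def \<mu>_def lz_def)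
  qed
  have ca: "cellular_automaton \<tau>" using lr by (auto simp: cellular_automaton_def)
  have lazy: "lazy_ca \<tau>"
    unfolding lazy_ca_def
  proof (intro exI conjI)
    show "local_rule \<tau> S \<mu>" by (rule lr)
    show "0 \<in> S" by (simp add: S_def)
    show "p \<in> extensional S" by (simp add: p_def)
    show "\<forall>z\<in>extensional S. (\<mu> z = z 0) = (z \<noteq> p)"
    proof
      fix z :: "'g \<Rightarrow> 'a"
      have "p 0 = b" using g0 by (simp add: p_def S_def)
      then show "(\<mu> z = z 0) = (z \<noteq> p)" using ab by (auto simp: \<mu>_def)
    qed
  qed
  have set: "{\<tau> ^^ k | k. True} = (\<lambda>k. \<tau> ^^ k) ` {..<n}"
  proof
    show "{\<tau> ^^ k | k. True} \<subseteq> (\<lambda>k. \<tau> ^^ k) ` {..<n}"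
    proof
      fix f assume "f \<in> {\<tau> ^^ k | k. True}"
      then obtain k where k: "f = \<tau> ^^ k" by blast
      show "f \<in> (\<lambda>k. \<tau> ^^ k) ` {..<n}"
      proof (cases "k < n")
        case True then show ?thesis using k by blast
      next
        case False
        then have "f = \<tau> ^^ (n - 1)" using k lz_stable[OF ab N_def assms(2), of k] \<tau>_def by simp
        moreover have "n - 1 \<in> {..<n}" using assms(2) by simp
        ultimately show ?thesis by blast
      qed
    qed
  qed blast
  have inj: "inj_on (\<lambda>k. \<tau> ^^ k) {..<n}"
  proof (rule inj_onI)
    fix i j assume ij: "i \<in> {..<n}" "j \<in> {..<n}" "\<tau> ^^ i = \<tau> ^^ j"
    show "i = j"
    proof (rule ccontr)
      assume "i \<noteq> j"
      then consider "i < j" | "j < i" by linarith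
      then show False
      proof cases
        case 1 then show False using lz_distinct[OF ab N_def assms(2) ord, of i j] ij \<tau>_def by auto
      next
        case 2 then show False using lz_distinct[OF ab N_def assms(2) ord, of j i] ij(1,2) ij(3)[symmetric] \<tau>_def by auto
      qed
    qed
  qed
  have "ca_ord \<tau> = n" unfolding ca_ord_def set using card_image[OF inj] by simp
  then show ?thesis using ca lazy by blast
qed

end
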